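(* Let $N\ge 2$. There exists a lower triangular matrix $H\in\mathbb{R}^{(N-1)\times(N-1)}$ with entries $h_{k,j}$ such that for every $d\ge 1$, every nonexpansive $\mathbb{T}\colon\mathbb{R}^d\to\mathbb{R}^d$ and every $y_0\in\mathbb{R}^d$: (i) the iterates of the Optimal Halpern Method $y_{k+1}=\frac{k+1}{k+2}\mathbb{T}y_k+\frac{1}{k+2}y_0$, $k=0,\dots,N-2$, satisfy $y_{k+1}=y_k-\sum_{j=0}^k h_{k+1,j+1}(y_j-\mathbb{T}y_j)$ for $k=0,\dots,N-2$; and (ii) the iterates of the Dual Optimal Halpern Method $y_{k+1}=y_k+\frac{N-k-1}{N-k}(\mathbb{T}y_k-\mathbb{T}y_{k-1})$, $k=0,\dots,N-2$ (with $\mathbb{T}y_{-1}:=y_0$), satisfy $y_{k+1}=y_k-\sum_{j=0}^k (H^{A})_{k+1,j+1}(y_j-\mathbb{T}y_j)$ for $k=0,\dots,N-2$, where $H^{A}$ denotes the anti-diagonal transpose $(H^A)_{k,j}=H_{N-j,N-k}$. That is, the two methods are H-duals of each other.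
   Context: Nonexpansive means $1$-Lipschitz. Indices of $(N-1)\times(N-1)$ matrices run over $1,\dots,N-1$. *)

theory Defs
  imports Complex_Main
begin

text \<open>R^d is represented by functions nat => real vanishing at indices >= d
  (components 0..d-1); this lets d vary inside the statement.\<close>

definition vec_space :: "nat \<Rightarrow> (nat \<Rightarrow> real) set" where
  "vec_space d = {x. \<forall>i\<ge>d. x i = 0}"

definition edist :: "nat \<Rightarrow> (nat \<Rightarrow> real) \<Rightarrow> (nat \<Rightarrow> real) \<Rightarrow> real" where
  "edist d x y = sqrt (\<Sum>i<d. (x i - y i)^2)"

definition nonexpansive :: "nat \<Rightarrow> ((nat \<Rightarrow> real) \<Rightarrow> (nat \<Rightarrow> real)) \<Rightarrow> bool" where
  "nonexpansive d T \<longleftrightarrow>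
     (\<forall>x\<in>vec_space d. T x \<in> vec_space d) \<and>
     (\<forall>x\<in>vec_space d. \<forall>y\<in>vec_space d. edist d (T x) (T y) \<le> edist d x y)"

fun ohm :: "((nat \<Rightarrow> real) \<Rightarrow> (nat \<Rightarrow> real)) \<Rightarrow> (nat \<Rightarrow> real) \<Rightarrow> nat \<Rightarrow> (nat \<Rightarrow> real)" where
  "ohm T y0 0 = y0"
| "ohm T y0 (Suc k) =
     (\<lambda>i. (real k + 1) / (real k + 2) * T (ohm T y0 k) i + 1 / (real k + 2) * y0 i)"

fun dohm :: "nat \<Rightarrow> ((nat \<Rightarrow> real) \<Rightarrow> (nat \<Rightarrow> real)) \<Rightarrow> (nat \<Rightarrow> real) \<Rightarrow> nat \<Rightarrow> (nat \<Rightarrow> real)" where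
  "dohm N T y0 0 = y0"
| "dohm N T y0 (Suc 0) =
     (\<lambda>i. y0 i + (real N - 1) / real N * (T y0 i - y0 i))"
| "dohm N T y0 (Suc (Suc k)) =
     (\<lambda>i. dohm N T y0 (Suc k) i
          + (real N - real k - 2) / (real N - real k - 1)
            * (T (dohm N T y0 (Suc k)) i - T (dohm N T y0 k) i))"

end

theory Submission
  imports Defs
begin

definition HH :: "nat \<Rightarrow> nat \<Rightarrow> real" where
  "HH a b = (if b = a then real a / (real a + 1)
             else if b < a then - real b / (real a * (real a + 1)) else 0)"

lemma alg1:
  fixes A B C x y :: real
  assumes "x \<noteq> 0" "y = x - 1"
  shows "A + y / x * (B - C) - B = (A - B) / x + y / x * (A - C)"
proof -
  have "y / x * (B - C) - (A - B) / x - y / x * (A - C) = (y * (B - C) - (A - B) - y * (A - C)) / x"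
    by (simp add: diff_divide_distrib)
  also have "\<dots> = x * (B - A) / x" unfolding assms(2) by (simp add: algebra_simps)
  also have "\<dots> = B - A" using assms(1) by simp
  finally show ?thesis by linarith
qed

lemma alg2: fixes a b c g :: real assumes "a \<noteq> 0" shows "c / b * g = a / b * (c / a * g)"
  using assms by simp

lemma alg6: fixes a b Y S G :: real assumes "b \<noteq> 0" "b = a + 1"
  shows "a/b*((Y - S) - G) + 1/b*Y = Y - a/b*S - a/b*G"
proof -
  have "a/b*Y + 1/b*Y = (a/b + 1/b)*Y" by (rule distrib_right[symmetric])
  also have "a/b + 1/b = (a+1)/b" by (rule add_divide_distrib[symmetric])
  also have "(a+1)/b = 1" using assms by simp
  finally have 1: "a/b*Y + 1/b*Y = Y" by simp
  have 2: "a/b*((Y - S) - G) = a/b*Y - a/b*S - a/b*G" by (simp only: right_diff_distrib)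
  show ?thesis using 1 2 by linarith
qed

lemma alg3: fixes g q q' x x' x'' S :: real
  assumes "x \<noteq> 0" "x' = x" "x'' = x" "q' = q"
  shows "g / q + x * S = x' * (S + g / (x'' * q'))"
  using assms by (simp add: algebra_simps)

lemma alg5: fixes g x c S :: real assumes "x \<noteq> 0"
  shows "g / x + c / x * (x * S) = g / x + c * S"
  using assms by simp

lemma alg4: fixes a b p q x g :: real
  assumes "a = p" "b = x" "a + 1 = q"
  shows "- b / (a * (a + 1)) * g = - (x * (g / (p * q)))"
  using assms by simp

lemma ohm_closed:
  "ohm T y0 k i = y0 i - (\<Sum>j<k. (real j + 1) / (real k + 1) * (ohm T y0 j i - T (ohm T y0 j) i))"
proof (induction k)
  case 0
  then show ?case by simp
next
  case (Suc k)
  let ?g = "\<lambda>j. ohm T y0 j i - T (ohm T y0 j) i"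
  let ?S = "\<Sum>j<k. (real j + 1) / (real k + 1) * ?g j"
  have s1: "(\<Sum>j<k. (real j + 1) / (real k + 2) * ?g j)
        = (real k + 1) / (real k + 2) * ?S"
    unfolding sum_distrib_left by (rule sum.cong) (auto intro: alg2)
  have e: "T (ohm T y0 k) i = (y0 i - ?S) - ?g k" using Suc.IH by linarith
  have "ohm T y0 (Suc k) i = (real k + 1) / (real k + 2) * T (ohm T y0 k) i + 1 / (real k + 2) * y0 i"
    by simp
  also have "\<dots> = (real k + 1) / (real k + 2) * ((y0 i - ?S) - ?g k) + 1 / (real k + 2) * y0 i"
    by (subst e) (rule refl)
  also have "\<dots> = y0 i - (real k + 1) / (real k + 2) * ?S - (real k + 1) / (real k + 2) * ?g k"
    by (rule alg6) auto
  also have "\<dots> = y0 i - (\<Sum>j<k. (real j + 1) / (real k + 2) * ?g j) - (real k + 1) / (real k + 2) * ?g k"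
    unfolding s1 ..
  also have "\<dots> = y0 i - (\<Sum>j<Suc k. (real j + 1) / (real (Suc k) + 1) * ?g j)"
    by (simp add: add.commute add.left_commute)
  finally show ?case .
qed

lemma ohm_step:
  "ohm T y0 (k + 1) i = ohm T y0 k i - (\<Sum>j\<le>k. HH (k + 1) (j + 1) * (ohm T y0 j i - T (ohm T y0 j) i))"
proof -
  let ?g = "\<lambda>j. ohm T y0 j i - T (ohm T y0 j) i"
  have A: "ohm T y0 (k+1) i = y0 i - (\<Sum>j<k. (real j + 1) / (real k + 2) * ?g j) - (real k + 1) / (real k + 2) * ?g k"
    using ohm_closed[of T y0 "k+1" i] by (simp add: add.commute add.left_commute)
  have B: "ohm T y0 k i = y0 i - (\<Sum>j<k. (real j + 1) / (real k + 1) * ?g j)"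
    by (rule ohm_closed)
  have C: "(\<Sum>j\<le>k. HH (k + 1) (j + 1) * ?g j) = (\<Sum>j<k. HH (k + 1) (j + 1) * ?g j) + HH (k+1) (k+1) * ?g k"
    by (simp add: lessThan_Suc_atMost[symmetric])
  have D: "(\<Sum>j<k. HH (k + 1) (j + 1) * ?g j) = (\<Sum>j<k. (real j + 1) / (real k + 2) * ?g j - (real j + 1) / (real k + 1) * ?g j)"
    by (rule sum.cong) (auto simp: HH_def field_simps)
  show ?thesis unfolding A B C D sum_subtractf by (simp add: HH_def field_simps)
qed

lemma dohm_aux:
  assumes N: "N \<ge> 2" and m: "m \<le> N - 2"
  shows "dohm N T y0 (Suc m) i - T (dohm N T y0 m) i =
    (real N - real m - 1) * (\<Sum>j\<le>m. (dohm N T y0 j i - T (dohm N T y0 j) i) / ((real N - real j - 1) * (real N - real j)))"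
  using m
proof (induction m)
  case 0
  have "real N - 1 \<noteq> 0" "real N \<noteq> 0" using N by auto
  then show ?case by (simp add: field_simps)
next
  case (Suc m)
  let ?g = "\<lambda>j. dohm N T y0 j i - T (dohm N T y0 j) i"
  let ?S = "\<Sum>j\<le>m. ?g j / ((real N - real j - 1) * (real N - real j))"
  have IH: "dohm N T y0 (Suc m) i - T (dohm N T y0 m) i = (real N - real m - 1) * ?S"
    using Suc by simp
  have r: "real m + 2 \<le> real N - 1" using Suc.prems N by linarith
  have "dohm N T y0 (Suc (Suc m)) i - T (dohm N T y0 (Suc m)) i =
    ?g (Suc m) / (real N - real m - 1) + (real N - real m - 2) / (real N - real m - 1) * (dohm N T y0 (Suc m) i - T (dohm N T y0 m) i)"
    using r by (simp only: dohm.simps) (rule alg1, auto)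
  also have "\<dots> = ?g (Suc m) / (real N - real m - 1) + (real N - real m - 2) * ?S"
    unfolding IH using r by (intro alg5) auto
  also have "\<dots> = (real N - real (Suc m) - 1) * (?S + ?g (Suc m) / ((real N - real (Suc m) - 1) * (real N - real (Suc m))))"
    using r by (intro alg3) auto
  also have "\<dots> = (real N - real (Suc m) - 1) * (\<Sum>j\<le>Suc m. ?g j / ((real N - real j - 1) * (real N - real j)))"
    by simp
  finally show ?case .
qed

lemma dohm_step:
  assumes N: "N \<ge> 2" and k: "k \<le> N - 2"
  shows "dohm N T y0 (k + 1) i = dohm N T y0 k i - (\<Sum>j\<le>k. HH (N - (j + 1)) (N - (k + 1))
                 * (dohm N T y0 j i - T (dohm N T y0 j) i))"
proof (cases k)
  case 0
  have "real N \<noteq> 0" using N by auto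
  moreover have "real (N - 1) = real N - 1" using N by simp
  ultimately show ?thesis using 0 by (simp add: HH_def field_simps)
next
  case (Suc m)
  let ?g = "\<lambda>j. dohm N T y0 j i - T (dohm N T y0 j) i"
  let ?S = "\<Sum>j\<le>m. ?g j / ((real N - real j - 1) * (real N - real j))"
  have m: "m \<le> N - 2" using k Suc by simp
  have r: "real m + 2 \<le> real N - 1" using k Suc N by linarith
  have IH: "dohm N T y0 (Suc m) i - T (dohm N T y0 m) i = (real N - real m - 1) * ?S"
    using dohm_aux[OF N m] by simp
  have C: "(\<Sum>j\<le>Suc m. HH (N - (j + 1)) (N - (Suc m + 1)) * ?g j)
     = (\<Sum>j\<le>m. HH (N - (j + 1)) (N - (Suc m + 1)) * ?g j) + HH (N - (Suc m + 1)) (N - (Suc m + 1)) * ?g (Suc m)"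
    by simp
  have D: "(\<Sum>j\<le>m. HH (N - (j + 1)) (N - (Suc m + 1)) * ?g j) = - ((real N - real m - 2) * ?S)"
    unfolding sum_distrib_left sum_negf[symmetric]
  proof (rule sum.cong)
    fix j assume j: "j \<in> {..m}"
    have e1: "real (N - (j+1)) = real N - real j - 1" using j m N by auto
    have e2: "real (N - (Suc m+1)) = real N - real m - 2" using j m N by auto
    have lt: "N - (Suc m + 1) < N - (j + 1)" using j m N by auto
    have p: "real N - real j - 1 > 0" using j r by auto
    show "HH (N - (j + 1)) (N - (Suc m + 1)) * ?g j = - ((real N - real m - 2) * (?g j / ((real N - real j - 1) * (real N - real j))))"
    proof -
      have h: "HH (N - (j + 1)) (N - (Suc m + 1)) = - real (N - (Suc m + 1)) / (real (N - (j + 1)) * (real (N - (j + 1)) + 1))"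
        using lt unfolding HH_def by auto
      show ?thesis unfolding h by (rule alg4) (use e1 e2 in auto)
    qed
  qed simp
  have E: "HH (N - (Suc m + 1)) (N - (Suc m + 1)) = (real N - real m - 2) / (real N - real m - 1)"
  proof -
    have e2: "real (N - (Suc m+1)) = real N - real m - 2" using m N by auto
    show ?thesis unfolding HH_def e2 by (simp add: algebra_simps)
  qed
  have "dohm N T y0 (Suc (Suc m)) i = dohm N T y0 (Suc m) i + (real N - real m - 2) / (real N - real m - 1)
     * ((dohm N T y0 (Suc m) i - T (dohm N T y0 m) i) - ?g (Suc m))"
    by simp
  also have "\<dots> = dohm N T y0 (Suc m) i + (real N - real m - 2) / (real N - real m - 1)
     * ((real N - real m - 1) * ?S - ?g (Suc m))"
    unfolding IH ..
  also have "\<dots> = dohm N T y0 (Suc m) i - (- ((real N - real m - 2) * ?S) + (real N - real m - 2) / (real N - real m - 1) * ?g (Suc m))"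
    using r by (simp add: field_simps)
  finally show ?thesis unfolding Suc using C D E by simp
qed

theorem proposition5p1:
  fixes N :: nat
  assumes "N \<ge> 2"
  shows "\<exists>H :: nat \<Rightarrow> nat \<Rightarrow> real.
    (\<forall>k j. 1 \<le> k \<and> k < j \<and> j \<le> N - 1 \<longrightarrow> H k j = 0) \<and>
    (\<forall>d :: nat. \<forall>T y0. d \<ge> 1 \<and> nonexpansive d T \<and> y0 \<in> vec_space d \<longrightarrow>
       (\<forall>k \<le> N - 2. ohm T y0 (k + 1) =
          (\<lambda>i. ohm T y0 k i - (\<Sum>j\<le>k. H (k + 1) (j + 1) * (ohm T y0 j i - T (ohm T y0 j) i)))) \<and>
       (\<forall>k \<le> N - 2. dohm N T y0 (k + 1) =
          (\<lambda>i. dohm N T y0 k i - (\<Sum>j\<le>k. H (N - (j + 1)) (N - (k + 1))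
                 * (dohm N T y0 j i - T (dohm N T y0 j) i)))))"
  apply (rule exI[of _ HH])
  apply (intro conjI allI impI)
   apply (simp add: HH_def)
  apply (intro conjI allI impI ext)
   apply (rule ohm_step)
  apply (rule ext, rule dohm_step[OF assms], assumption)
  done

end
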